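(* Let $Q$ be a quantale, $M$ a shrinkable $Q$-module, $\mathcal{F}_1,\dots,\mathcal{F}_n\in\operatorname{mF}(Q)$ and $\mathcal{F}=\mathcal{F}_1\cap\cdots\cap\mathcal{F}_n$. Let $\varphi:M_\mathcal{F}\to\prod_{k=1}^nM_{\mathcal{F}_k}$ be the $Q$-premodule map $\overline x\mapsto(\overline x,\dots,\overline x)$. Then (a) $\varphi$ is injective; (b) if $\mathcal{F}_i+\mathcal{F}_j$ is 1-step over $M$ for all $1\le i<j\le n$, then for $x_1,\dots,x_n\in M$ we have $(\overline{x_1},\dots,\overline{x_n})\in\operatorname{im}\varphi$ if and only if for all $1\le i<j\le n$ the image of $\overline{x_i}$ under $M_{\mathcal{F}_i}\to M_{\mathcal{F}_i+\mathcal{F}_j}$ equals the image of $\overline{x_j}$ under $M_{\mathcal{F}_j}\to M_{\mathcal{F}_i+\mathcal{F}_j}$.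
   Context: A quantale is a poset $Q$ in which every nonempty subset has a join $\sum$ (binary join $a+b$; no bottom required), with top $1$ and a commutative associative multiplication with unit $1$ distributing over nonempty joins. A $Q$-module is a poset $M$ with all nonempty joins and an associative unital action $Q\times M\to M$ distributing over nonempty joins in each variable; a $Q$-premodule requires only binary joins and finite distributivity. A multiplicative filter (m-filter) is a subset $\mathcal{F}\subseteq Q$ containing $1$, upward closed and closed under multiplication; $\operatorname{mF}(Q)$ is the set of them; $\mathcal{F}+\mathcal{G}$ is the smallest m-filter containing $\mathcal{F}\cup\mathcal{G}$. For $x,x_i$ write $x\le^*\sum_{i\in I}x_i$ if $x\le\sum_{i\in I_0}x_i$ for a finite nonempty $I_0\subseteq I$. $M$ is shrinkable if whenever $x\le\sum_ix_i$ there is a family $(y_j)$ with $x=\sum_jy_j$ and $y_j\le^*\sum_ix_i$ for all $j$. Localization: $a\preceq^1_\mathcal{F}b$ means there are families $(a_i)$ in $M$, $(s_i)$ in $\mathcal{F}$ with $a\le\sum_ia_i$ and $s_ia_i\le b$; $a\preceq^n_\mathcal{F}b$ means a chain of $n$ such steps through elements of $M$; $a\preceq_\mathcal{F}b$ means $a\preceq^n_\mathcal{F}b$ for some $n\ge1$. $M_\mathcal{F}=M/\!\sim$ where $a\sim b$ iff $a\preceq_\mathcal{F}b$ and $b\preceq_\mathcal{F}a$, with classes $\overline a$ ordered by $\overline a\le\overline b\iff a\preceq_\mathcal{F}b$; it is a $Q$-premodule via $\overline a+\overline b=\overline{a+b}$, $q\overline a=\overline{qa}$. For $\mathcal{F}\subseteq\mathcal{G}$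 the map $M_\mathcal{F}\to M_\mathcal{G}$, $\overline a\mapsto\overline a$, is a well-defined premodule map. $\mathcal{F}$ is localizable over $M$ if for each $b$ there is $n_b$ with $a\preceq_\mathcal{F}b\Rightarrow a\preceq^{n_b}_\mathcal{F}b$; $\mathcal{F}$ is 1-step over $M$ if it is localizable and $a\preceq_\mathcal{F}b$ implies $a\preceq^1_\mathcal{F}b$. *)

theory Defs
  imports "HOL-Library.FuncSet"
begin

definition is_join :: "'a::order set \<Rightarrow> 'a \<Rightarrow> bool" where
  "is_join S x \<longleftrightarrow> (\<forall>y\<in>S. y \<le> x) \<and> (\<forall>z. (\<forall>y\<in>S. y \<le> z) \<longrightarrow> x \<le> z)"

definition join :: "'a::order set \<Rightarrow> 'a" where
  "join S = (THE x. is_join S x)"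

definition has_ne_joins :: "'a::order itself \<Rightarrow> bool" where
  "has_ne_joins _ \<longleftrightarrow> (\<forall>S::'a set. S \<noteq> {} \<longrightarrow> (\<exists>x. is_join S x))"

definition quantale :: "'q::{order,comm_monoid_mult} itself \<Rightarrow> bool" where
  "quantale T \<longleftrightarrow> has_ne_joins T \<and> (\<forall>x::'q. x \<le> 1) \<and>
     (\<forall>(q::'q) S. S \<noteq> {} \<longrightarrow> q * join S = join ((\<lambda>s. q * s) ` S))"

definition qmodule :: "('q::{order,comm_monoid_mult} \<Rightarrow> 'm::order \<Rightarrow> 'm) \<Rightarrow> bool" where
  "qmodule act \<longleftrightarrow> has_ne_joins TYPE('m) \<and>
     (\<forall>m. act 1 m = m) \<and>
     (\<forall>p q m. act (p * q) m = act p (act q m)) \<and>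
     (\<forall>q S. S \<noteq> {} \<longrightarrow> act q (join S) = join (act q ` S)) \<and>
     (\<forall>m T. T \<noteq> {} \<longrightarrow> act (join T) m = join ((\<lambda>q. act q m) ` T))"

text \<open>Families are represented by (nonempty) sets of their members; duplicates are
irrelevant for joins.\<close>
definition shrinkable :: "'m::order itself \<Rightarrow> bool" where
  "shrinkable _ \<longleftrightarrow> (\<forall>(x::'m) X. X \<noteq> {} \<and> x \<le> join X \<longrightarrow>
     (\<exists>Y. Y \<noteq> {} \<and> x = join Y \<and>
        (\<forall>y\<in>Y. \<exists>X0. finite X0 \<and> X0 \<noteq> {} \<and> X0 \<subseteq> X \<and> y \<le> join X0)))"

definition mfilter :: "'q::{order,comm_monoid_mult} set \<Rightarrow> bool" where
  "mfilter F \<longleftrightarrow> 1 \<in> F \<and> (\<forall>a b. a \<in> F \<and> a \<le> b \<longrightarrow> b \<in> F) \<and>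
     (\<forall>a\<in>F. \<forall>b\<in>F. a * b \<in> F)"

definition mfsum :: "'q::{order,comm_monoid_mult} set \<Rightarrow> 'q set \<Rightarrow> 'q set" where
  "mfsum F G = \<Inter>{H. mfilter H \<and> F \<union> G \<subseteq> H}"

text \<open>One step: families (a_i, s_i), given as a nonempty set of pairs.\<close>
definition step1 :: "('q::{order,comm_monoid_mult} \<Rightarrow> 'm::order \<Rightarrow> 'm) \<Rightarrow> 'q set \<Rightarrow> 'm \<Rightarrow> 'm \<Rightarrow> bool" where
  "step1 act F a b \<longleftrightarrow> (\<exists>P::('m \<times> 'q) set. P \<noteq> {} \<and>
     (\<forall>(c, s)\<in>P. s \<in> F \<and> act s c \<le> b) \<and> a \<le> join (fst ` P))"

definition stepn :: "('q::{order,comm_monoid_mult} \<Rightarrow> 'm::order \<Rightarrow> 'm) \<Rightarrow> 'q set \<Rightarrow> nat \<Rightarrow> 'm \<Rightarrow> 'm \<Rightarrow> bool" where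
  "stepn act F n = (step1 act F ^^ n)"

definition loc_le :: "('q::{order,comm_monoid_mult} \<Rightarrow> 'm::order \<Rightarrow> 'm) \<Rightarrow> 'q set \<Rightarrow> 'm \<Rightarrow> 'm \<Rightarrow> bool" where
  "loc_le act F a b \<longleftrightarrow> (\<exists>n\<ge>1. stepn act F n a b)"

definition loc_eq :: "('q::{order,comm_monoid_mult} \<Rightarrow> 'm::order \<Rightarrow> 'm) \<Rightarrow> 'q set \<Rightarrow> 'm \<Rightarrow> 'm \<Rightarrow> bool" where
  "loc_eq act F a b \<longleftrightarrow> loc_le act F a b \<and> loc_le act F b a"

definition cls :: "('q::{order,comm_monoid_mult} \<Rightarrow> 'm::order \<Rightarrow> 'm) \<Rightarrow> 'q set \<Rightarrow> 'm \<Rightarrow> 'm set" where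
  "cls act F a = {b. loc_eq act F a b}"

definition locmod :: "('q::{order,comm_monoid_mult} \<Rightarrow> 'm::order \<Rightarrow> 'm) \<Rightarrow> 'q set \<Rightarrow> 'm set set" where
  "locmod act F = range (cls act F)"

definition locmap :: "('q::{order,comm_monoid_mult} \<Rightarrow> 'm::order \<Rightarrow> 'm) \<Rightarrow> 'q set \<Rightarrow> 'q set \<Rightarrow> 'm set \<Rightarrow> 'm set" where
  "locmap act F G C = cls act G (SOME a. a \<in> C)"

definition localizable :: "('q::{order,comm_monoid_mult} \<Rightarrow> 'm::order \<Rightarrow> 'm) \<Rightarrow> 'q set \<Rightarrow> bool" where
  "localizable act F \<longleftrightarrow> (\<forall>b. \<exists>nb\<ge>1. \<forall>a. loc_le act F a b \<longrightarrow> stepn act F nb a b)"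

definition one_step :: "('q::{order,comm_monoid_mult} \<Rightarrow> 'm::order \<Rightarrow> 'm) \<Rightarrow> 'q set \<Rightarrow> bool" where
  "one_step act F \<longleftrightarrow> localizable act F \<and> (\<forall>a b. loc_le act F a b \<longrightarrow> step1 act F a b)"

text \<open>The diagonal map M_F \<rightarrow> \<Prod>_{k=1..n} M_{F_k}; tuples are functions on {1..n}.\<close>
definition diag :: "('q::{order,comm_monoid_mult} \<Rightarrow> 'm::order \<Rightarrow> 'm) \<Rightarrow> 'q set \<Rightarrow> nat \<Rightarrow> (nat \<Rightarrow> 'q set) \<Rightarrow> 'm set \<Rightarrow> (nat \<Rightarrow> 'm set)" where
  "diag act F n Fs C = restrict (\<lambda>k. locmap act F (Fs k) C) {1..n}"

end

theory Submission
  imports Defs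
begin

lemma is_join_unique: "is_join S x \<Longrightarrow> is_join S y \<Longrightarrow> x = (y::'a::order)"
  unfolding is_join_def by (meson order_antisym)

lemma join_eq: "is_join S x \<Longrightarrow> join S = x"
  unfolding join_def using is_join_unique by blast

lemma join_is_join: "has_ne_joins TYPE('a::order) \<Longrightarrow> S \<noteq> {} \<Longrightarrow> is_join (S::'a set) (join S)"
  unfolding has_ne_joins_def using join_eq by metis

lemma join_upper: "has_ne_joins TYPE('a::order) \<Longrightarrow> x \<in> S \<Longrightarrow> x \<le> join (S::'a set)"
  using join_is_join[of S] unfolding is_join_def by blast

lemma join_least: "has_ne_joins TYPE('a::order) \<Longrightarrow> S \<noteq> {} \<Longrightarrow> (\<And>y. y \<in> S \<Longrightarrow> y \<le> z) \<Longrightarrow> join (S::'a set) \<le> z"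
  using join_is_join[of S] unfolding is_join_def by blast

lemma join_single: "join {x::'a::order} = x"
  by (rule join_eq) (auto simp: is_join_def)

lemma join_two_le: "(a::'a::order) \<le> b \<Longrightarrow> join {a,b} = b"
  by (rule join_eq) (auto simp: is_join_def)

lemma join_subset: "has_ne_joins TYPE('a::order) \<Longrightarrow> A \<noteq> {} \<Longrightarrow> A \<subseteq> B \<Longrightarrow> join (A::'a set) \<le> join B"
  by (rule join_least) (auto intro: join_upper)

definition Cov :: "('a::order \<Rightarrow> bool) \<Rightarrow> 'a \<Rightarrow> bool" where
  "Cov P x \<longleftrightarrow> (\<exists>Y. Y \<noteq> {} \<and> x \<le> join Y \<and> (\<forall>y\<in>Y. P y \<and> y \<le> x))"
definition dclosed :: "('a::order \<Rightarrow> bool) \<Rightarrow> bool" where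
  "dclosed P \<longleftrightarrow> (\<forall>y z. y \<le> z \<longrightarrow> P z \<longrightarrow> P y)"
definition jclosed :: "('a::order \<Rightarrow> bool) \<Rightarrow> bool" where
  "jclosed P \<longleftrightarrow> (\<forall>y z. P y \<longrightarrow> P z \<longrightarrow> P (join {y,z}))"

lemma fin_join_closed:
  assumes J: "has_ne_joins TYPE('a::order)" and d: "dclosed P" and j: "jclosed P"
  shows "finite X \<Longrightarrow> X \<noteq> {} \<Longrightarrow> \<forall>x\<in>X. P x \<Longrightarrow> P (join (X::'a set))"
proof (induction X rule: finite_ne_induct)
  case (singleton x) thus ?case by (simp add: join_single)
next
  case (insert x F)
  have "P (join {x, join F})" using j insert by (simp add: jclosed_def)
  moreover have "join (insert x F) \<le> join {x, join F}"
  proof (rule join_least[OF J], simp)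
    fix y assume "y \<in> insert x F"
    then show "y \<le> join {x, join F}"
    proof
      assume "y = x" thus ?thesis using join_upper[OF J, of x "{x, join F}"] by simp
    next
      assume "y \<in> F"
      hence "y \<le> join F" using join_upper[OF J] by blast
      also have "join F \<le> join {x, join F}" using join_upper[OF J, of "join F" "{x, join F}"] by simp
      finally show ?thesis .
    qed
  qed
  ultimately show ?case using d by (auto simp: dclosed_def)
qed

lemma shrink_cov:
  assumes J: "has_ne_joins TYPE('a::order)" and S: "shrinkable TYPE('a)"
   and d: "dclosed P" and j: "jclosed P" and C: "C \<noteq> {}" "(x::'a) \<le> join C" "\<forall>c\<in>C. P c"
  shows "\<exists>Y. Y \<noteq> {} \<and> x = join Y \<and> (\<forall>y\<in>Y. P y)"
proof -
  have "\<forall>(x::'a) X. X \<noteq> {} \<and> x \<le> join X \<longrightarrow>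
     (\<exists>Y. Y \<noteq> {} \<and> x = join Y \<and>
        (\<forall>y\<in>Y. \<exists>X0. finite X0 \<and> X0 \<noteq> {} \<and> X0 \<subseteq> X \<and> y \<le> join X0))"
    using S unfolding shrinkable_def .
  hence "\<exists>Y. Y \<noteq> {} \<and> x = join Y \<and>
        (\<forall>y\<in>Y. \<exists>X0. finite X0 \<and> X0 \<noteq> {} \<and> X0 \<subseteq> C \<and> y \<le> join X0)"
    using C(1,2) by simp
  then obtain Y where Y: "Y \<noteq> {}" "x = join Y"
      "\<forall>y\<in>Y. \<exists>X0. finite X0 \<and> X0 \<noteq> {} \<and> X0 \<subseteq> C \<and> y \<le> join X0"
    by blast
  have "\<forall>y\<in>Y. P y"
  proof
    fix y assume "y \<in> Y"
    then obtain X0 where X0: "finite X0" "X0 \<noteq> {}" "X0 \<subseteq> C" "y \<le> join X0" using Y(3) by blast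
    have "\<forall>x\<in>X0. P x" using X0(3) C(3) by blast
    hence "P (join X0)" using fin_join_closed[OF J d j X0(1) X0(2)] by simp
    thus "P y" using d X0(4) unfolding dclosed_def by blast
  qed
  thus ?thesis using Y(1,2) by blast
qed

lemma shrink_Cov:
  assumes J: "has_ne_joins TYPE('a::order)" and S: "shrinkable TYPE('a)"
   and d: "dclosed P" and j: "jclosed P" and C: "C \<noteq> {}" "(x::'a) \<le> join C" "\<forall>c\<in>C. P c"
  shows "Cov P x"
proof -
  obtain Y where "Y \<noteq> {}" "x = join Y" "\<forall>y\<in>Y. P y" using shrink_cov[OF assms] by blast
  thus ?thesis unfolding Cov_def using join_upper[OF J, of _ Y] by auto
qed

lemma cov_int:
  assumes J: "has_ne_joins TYPE('a::order)" and S: "shrinkable TYPE('a)"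
   and dP: "dclosed P" and dQ: "dclosed Q" and jQ: "jclosed Q"
   and cP: "Cov P (x::'a)" and cQ: "Cov Q x"
  shows "Cov (\<lambda>y. P y \<and> Q y) x"
proof -
  obtain Y where Y: "Y \<noteq> {}" "x \<le> join Y" "\<forall>y\<in>Y. P y \<and> y \<le> x" using cP unfolding Cov_def by blast
  obtain Y' where Y': "Y' \<noteq> {}" "x \<le> join Y'" "\<forall>y\<in>Y'. Q y \<and> y \<le> x" using cQ unfolding Cov_def by blast
  have "\<forall>y\<in>Y. \<exists>Z. Z \<noteq> {} \<and> y = join Z \<and> (\<forall>z\<in>Z. Q z)"
  proof
    fix y assume "y \<in> Y"
    hence "y \<le> join Y'" using Y Y' order_trans by blast
    thus "\<exists>Z. Z \<noteq> {} \<and> y = join Z \<and> (\<forall>z\<in>Z. Q z)"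
      using shrink_cov[OF J S dQ jQ, of Y' y] Y' by blast
  qed
  then obtain Z where Z: "\<forall>y\<in>Y. Z y \<noteq> {} \<and> y = join (Z y) \<and> (\<forall>z\<in>Z y. Q z)" by metis
  let ?W = "\<Union>y\<in>Y. Z y"
  show ?thesis unfolding Cov_def
  proof (rule exI[of _ ?W], intro conjI)
    show "?W \<noteq> {}" using Y Z by auto
    have "join Y \<le> join ?W"
    proof (rule join_least[OF J Y(1)])
      fix y assume y: "y \<in> Y"
      hence "y = join (Z y)" using Z by blast
      also have "\<dots> \<le> join ?W" using join_subset[OF J, of "Z y" ?W] Z y by blast
      finally show "y \<le> join ?W" .
    qed
    thus "x \<le> join ?W" using Y(2) order_trans by blast
    show "\<forall>z\<in>?W. (P z \<and> Q z) \<and> z \<le> x"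
    proof
    fix z assume "z \<in> ?W"
    then obtain y where y: "y \<in> Y" "z \<in> Z y" by blast
    have "z \<le> y" using Z y join_upper[OF J, of z "Z y"] by metis
    moreover have "P y" "y \<le> x" using y Y by auto
    moreover have "Q z" using y Z by blast
    ultimately show "(P z \<and> Q z) \<and> z \<le> x" using dP unfolding dclosed_def by (blast intro: order_trans)
    qed
  qed
qed

lemma Cov_mono: "Cov P x \<Longrightarrow> (\<And>y. P y \<Longrightarrow> Q y) \<Longrightarrow> Cov Q x"
  unfolding Cov_def by blast



lemma mfilter_one: "mfilter F \<Longrightarrow> 1 \<in> F" by (simp add: mfilter_def)
lemma mfilter_up: "mfilter F \<Longrightarrow> a \<in> F \<Longrightarrow> a \<le> b \<Longrightarrow> b \<in> F" by (auto simp: mfilter_def)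
lemma mfilter_mult: "mfilter F \<Longrightarrow> a \<in> F \<Longrightarrow> b \<in> F \<Longrightarrow> a * b \<in> F" by (simp add: mfilter_def)
lemma mfilter_Inter: assumes h: "\<And>i. i \<in> I \<Longrightarrow> mfilter (Fs i)" shows "mfilter (\<Inter>i\<in>I. Fs i)"
proof -
  have 1: "1 \<in> (\<Inter>i\<in>I. Fs i)" using h mfilter_one by auto
  have 2: "\<forall>a b. a \<in> (\<Inter>i\<in>I. Fs i) \<and> a \<le> b \<longrightarrow> b \<in> (\<Inter>i\<in>I. Fs i)"
  proof (intro allI impI)
    fix a b assume ab: "a \<in> (\<Inter>i\<in>I. Fs i) \<and> a \<le> b"
    show "b \<in> (\<Inter>i\<in>I. Fs i)"
    proof (rule INT_I)
      fix i assume i: "i \<in> I"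
      have "a \<in> Fs i" using ab i by blast
      thus "b \<in> Fs i" using mfilter_up[OF h[OF i]] ab by blast
    qed
  qed
  have 3: "\<forall>a\<in>(\<Inter>i\<in>I. Fs i). \<forall>b\<in>(\<Inter>i\<in>I. Fs i). a * b \<in> (\<Inter>i\<in>I. Fs i)"
  proof (intro ballI)
    fix a b assume a: "a \<in> (\<Inter>i\<in>I. Fs i)" and b: "b \<in> (\<Inter>i\<in>I. Fs i)"
    show "a * b \<in> (\<Inter>i\<in>I. Fs i)"
    proof (rule INT_I)
      fix i assume i: "i \<in> I"
      have "a \<in> Fs i" "b \<in> Fs i" using a b i by blast+
      thus "a * b \<in> Fs i" using mfilter_mult[OF h[OF i]] by blast
    qed
  qed
  show ?thesis unfolding mfilter_def using 1 2 3 by (intro conjI)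
qed

locale qm =
  fixes act :: "'q::{order,comm_monoid_mult} \<Rightarrow> 'm::order \<Rightarrow> 'm"
  assumes quant: "quantale TYPE('q)" and modu: "qmodule act" and shr: "shrinkable TYPE('m)"
begin

lemmas qparts = quant[unfolded quantale_def]
lemmas mparts = modu[unfolded qmodule_def]
lemma jq: "has_ne_joins TYPE('q)" using qparts by (rule conjunct1)
lemma jm: "has_ne_joins TYPE('m)" using mparts by (rule conjunct1)
lemma top1: "(x::'q) \<le> 1" using conjunct1[OF conjunct2[OF qparts]] by (rule spec)
lemma qdist: "S \<noteq> {} \<Longrightarrow> (q::'q) * join S = join ((\<lambda>s. q * s) ` S)"
  by (rule conjunct2[OF conjunct2[OF qparts], rule_format])
lemma act1: "act 1 m = m" using conjunct1[OF conjunct2[OF mparts]] by (rule spec)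
lemma act_mult: "act (p * q) m = act p (act q m)"
  by (rule conjunct1[OF conjunct2[OF conjunct2[OF mparts]], rule_format])
lemma act_join_m: "S \<noteq> {} \<Longrightarrow> act q (join S) = join (act q ` S)"
  by (rule conjunct1[OF conjunct2[OF conjunct2[OF conjunct2[OF mparts]]], rule_format])
lemma act_join_q: "T \<noteq> {} \<Longrightarrow> act (join T) m = join ((\<lambda>q. act q m) ` T)"
  by (rule conjunct2[OF conjunct2[OF conjunct2[OF conjunct2[OF mparts]]], rule_format])

lemma mult_mono_r: "(a::'q) \<le> b \<Longrightarrow> q * a \<le> q * b"
proof -
  assume "a \<le> b"
  hence "q * b = q * join {a,b}" by (simp add: join_two_le)
  also have "\<dots> = join {q*a, q*b}" using qdist[of "{a,b}" q] by simp
  finally have e: "q * b = join {q*a, q*b}" .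
  have "q*a \<le> join {q*a, q*b}" by (rule join_upper[OF jq]) simp
  thus ?thesis using e by (rule ord_le_eq_trans[OF _ sym])
qed

lemma mult_le: "(p::'q) * q \<le> p"
  using mult_mono_r[OF top1[of q], of p] by simp

lemma mult_le2: "(p::'q) * q \<le> q"
  using mult_le[of q p] by (simp add: mult.commute)

lemma act_mono_m: "a \<le> b \<Longrightarrow> act q a \<le> act q b"
proof -
  assume "a \<le> b"
  hence "act q b = act q (join {a,b})" by (simp add: join_two_le)
  also have "\<dots> = join {act q a, act q b}" using act_join_m[of "{a,b}" q] by simp
  finally have e: "act q b = join {act q a, act q b}" .
  have "act q a \<le> join {act q a, act q b}" by (rule join_upper[OF jm]) simp
  thus ?thesis using e by (rule ord_le_eq_trans[OF _ sym])
qed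

lemma act_mono_q: "p \<le> q \<Longrightarrow> act p m \<le> act q m"
proof -
  assume "p \<le> q"
  hence "act q m = act (join {p,q}) m" by (simp add: join_two_le)
  also have "\<dots> = join {act p m, act q m}" using act_join_q[of "{p,q}" m] by simp
  finally have e: "act q m = join {act p m, act q m}" .
  have "act p m \<le> join {act p m, act q m}" by (rule join_upper[OF jm]) simp
  thus ?thesis using e by (rule ord_le_eq_trans[OF _ sym])
qed

lemma act_le: "act q m \<le> m"
  using act_mono_q[OF top1[of q], of m] by (simp add: act1)

lemma act_join2_q: "act (join {u,w}) z = join {act u z, act w z}"
  using act_join_q[of "{u,w}" z] by simp

lemma act_join2_m: "act q (join {a,b}) = join {act q a, act q b}"
  using act_join_m[of "{a,b}" q] by simp

lemma jq_upper1: "(u::'q) \<le> join {u,w}" using join_upper[OF jq] by simp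
lemma jq_upper2: "(w::'q) \<le> join {u,w}" using join_upper[OF jq] by simp
lemma jm_least2: "(a::'m) \<le> c \<Longrightarrow> b \<le> c \<Longrightarrow> join {a,b} \<le> c"
  by (rule join_least[OF jm]) auto

lemma step1_down:
  assumes xa: "x \<le> a" and st: "step1 act F a c" shows "step1 act F x c"
proof -
  obtain P where P: "P \<noteq> {}" "\<forall>(d,s)\<in>P. s\<in>F \<and> act s d \<le> c" "a \<le> join (fst ` P)"
    using st unfolding step1_def by blast
  have "x \<le> join (fst ` P)" using xa P(3) by (rule order_trans)
  thus ?thesis unfolding step1_def using P(1,2) by blast
qed

lemma step1_up:
  assumes st: "step1 act F a c" and cd: "c \<le> d" shows "step1 act F a d"
proof -
  obtain P where P: "P \<noteq> {}" "\<forall>(e,s)\<in>P. s\<in>F \<and> act s e \<le> c" "a \<le> join (fst ` P)"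
    using st unfolding step1_def by blast
  have "\<forall>(e,s)\<in>P. s\<in>F \<and> act s e \<le> d"
  proof clarify
    fix e s assume "(e,s) \<in> P"
    hence "s \<in> F" "act s e \<le> c" using P(2) by auto
    thus "s \<in> F \<and> act s e \<le> d" using cd by (blast intro: order_trans)
  qed
  thus ?thesis unfolding step1_def using P(1,3) by blast
qed

lemma step1_le: "1 \<in> F \<Longrightarrow> a \<le> b \<Longrightarrow> step1 act F a b"
  unfolding step1_def by (rule exI[of _ "{(a,1)}"]) (simp add: act1 join_single)

lemma step1_filter:
  assumes FG: "F \<subseteq> G" and st: "step1 act F a b" shows "step1 act G a b"
proof -
  obtain P where P: "P \<noteq> {}" "\<forall>(e,s)\<in>P. s\<in>F \<and> act s e \<le> b" "a \<le> join (fst ` P)"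
    using st unfolding step1_def by blast
  have "\<forall>(e,s)\<in>P. s\<in>G \<and> act s e \<le> b" using P(2) FG by blast
  thus ?thesis unfolding step1_def using P(1,3) by blast
qed

fun Dn :: "'q set \<Rightarrow> nat \<Rightarrow> 'm \<Rightarrow> 'm \<Rightarrow> bool" where
  "Dn F 0 a b = (a \<le> b)"
| "Dn F (Suc m) a b = (\<exists>c. step1 act F a c \<and> Dn F m c b)"

lemma Dn_down: "x \<le> a \<Longrightarrow> Dn F m a b \<Longrightarrow> Dn F m x b"
proof (cases m)
  case 0 thus "x \<le> a \<Longrightarrow> Dn F m a b \<Longrightarrow> Dn F m x b" by (simp add: order_trans[of x a b])
next
  case (Suc k) thus "x \<le> a \<Longrightarrow> Dn F m a b \<Longrightarrow> Dn F m x b" using step1_down by (simp) blast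
qed

lemma Dn_Suc: "1 \<in> F \<Longrightarrow> Dn F m a b \<Longrightarrow> Dn F (Suc m) a b"
proof (induction m arbitrary: a)
  case 0 thus ?case using step1_le by auto
next
  case (Suc m) thus ?case by auto
qed

lemma Dn_mono: assumes "1 \<in> F" "Dn F m a b" "m \<le> k" shows "Dn F k a b"
  using assms(3)
proof (induction k rule: dec_induct)
  case base thus ?case using \<open>Dn F m a b\<close> .
next
  case (step k) thus ?case using Dn_Suc[OF \<open>1 \<in> F\<close>] by blast
qed

lemma Dn_trans: "Dn F m a b \<Longrightarrow> Dn F k b c \<Longrightarrow> Dn F (m + k) a c"
proof (induction m arbitrary: a)
  case 0 thus ?case using Dn_down[of a b F k c] by simp
next
  case (Suc m) thus ?case by auto
qed

lemma Dn_filter: "F \<subseteq> G \<Longrightarrow> Dn F m a b \<Longrightarrow> Dn G m a b"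
  by (induction m arbitrary: a) (auto intro: step1_filter)

lemma stepn_Dn: "stepn act F m a b \<Longrightarrow> Dn F m a b"
proof (induction m arbitrary: a)
  case 0 thus ?case by (simp add: stepn_def)
next
  case (Suc m)
  then obtain c where "step1 act F a c" "stepn act F m c b"
    unfolding stepn_def using relpowp_Suc_D2 by metis
  thus ?case using Suc.IH by auto
qed

lemma Dn_stepn: "1 \<in> F \<Longrightarrow> Dn F m a b \<Longrightarrow> stepn act F (Suc m) a b"
proof (induction m arbitrary: a)
  case 0
  hence "step1 act F a b" using step1_le by simp
  thus ?case unfolding stepn_def by (rule relpowp_Suc_I2[OF _ relpowp_0_I])
next
  case (Suc m)
  then obtain c where "step1 act F a c" "Dn F m c b" by auto
  thus ?case using Suc unfolding stepn_def by (meson relpowp_Suc_I2)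
qed

lemma loc_le_iff: "1 \<in> F \<Longrightarrow> loc_le act F a b \<longleftrightarrow> (\<exists>m. Dn F m a b)"
proof
  assume "loc_le act F a b" thus "\<exists>m. Dn F m a b" unfolding loc_le_def using stepn_Dn by blast
next
  assume "1 \<in> F" "\<exists>m. Dn F m a b"
  then obtain m where "stepn act F (Suc m) a b" using Dn_stepn by blast
  thus "loc_le act F a b" unfolding loc_le_def by (intro exI[of _ "Suc m"]) simp
qed

lemma Dn_join: "S \<noteq> {} \<Longrightarrow> \<forall>x\<in>S. Dn F m x b \<Longrightarrow> Dn F m (join S) b"
proof (induction m arbitrary: S)
  case 0 thus ?case by (simp add: join_least[OF jm])
next
  case (Suc m)
  then have "\<forall>x\<in>S. \<exists>c. step1 act F x c \<and> Dn F m c b" by simp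
  from bchoice[OF this] obtain c where c: "\<forall>x\<in>S. step1 act F x (c x) \<and> Dn F m (c x) b" by blast
  have "\<forall>x\<in>S. \<exists>P. P \<noteq> {} \<and> (\<forall>(d,s)\<in>P. s\<in>F \<and> act s d \<le> c x) \<and> x \<le> join (fst ` P)"
  proof
    fix x assume "x \<in> S"
    hence "step1 act F x (c x)" using c by blast
    thus "\<exists>P. P \<noteq> {} \<and> (\<forall>(d,s)\<in>P. s\<in>F \<and> act s d \<le> c x) \<and> x \<le> join (fst ` P)"
      unfolding step1_def .
  qed
  from bchoice[OF this] obtain P where
    P: "\<forall>x\<in>S. P x \<noteq> {} \<and> (\<forall>(d,s)\<in>P x. s\<in>F \<and> act s d \<le> c x) \<and> x \<le> join (fst ` P x)"
    by blast
  let ?C = "c ` S"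
  have D: "Dn F m (join ?C) b" using Suc.IH[of ?C] Suc.prems c by auto
  let ?P = "\<Union>x\<in>S. P x"
  have "step1 act F (join S) (join ?C)"
    unfolding step1_def
  proof (rule exI[of _ ?P], intro conjI)
    show "?P \<noteq> {}" using P Suc.prems by auto
    show "\<forall>(d,s)\<in>?P. s\<in>F \<and> act s d \<le> join ?C"
    proof (clarify)
      fix d s x assume x: "x \<in> S" "(d,s) \<in> P x"
      hence "s \<in> F" "act s d \<le> c x" using P by auto
      moreover have "c x \<le> join ?C" using join_upper[OF jm] x by blast
      ultimately show "s\<in>F \<and> act s d \<le> join ?C" using order_trans by blast
    qed
    show "join S \<le> join (fst ` ?P)"
    proof (rule join_least[OF jm Suc.prems(1)])
      fix x assume x: "x \<in> S"
      hence "x \<le> join (fst ` P x)" using P by blast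
      also have "\<dots> \<le> join (fst ` ?P)" using join_subset[OF jm, of "fst ` P x" "fst ` ?P"] P x by blast
      finally show "x \<le> join (fst ` ?P)" .
    qed
  qed
  thus ?case using D by auto
qed

lemma Dn_join2: "Dn F m x b \<Longrightarrow> Dn F m y b \<Longrightarrow> Dn F m (join {x,y}) b"
  using Dn_join[of "{x,y}"] by auto

lemma step1_Cov:
  assumes G: "mfilter G" and st: "step1 act G a c"
  shows "Cov (\<lambda>y. \<exists>u\<in>G. act u y \<le> c) a"
proof -
  obtain P where P: "P \<noteq> {}" "\<forall>(d,s)\<in>P. s\<in>G \<and> act s d \<le> c" "a \<le> join (fst ` P)"
    using st unfolding step1_def by blast
  show ?thesis
  proof (rule shrink_Cov[OF jm shr _ _ _ P(3)])
    show "dclosed (\<lambda>y. \<exists>u\<in>G. act u y \<le> c)" unfolding dclosed_def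
      using act_mono_m order_trans by blast
    show "jclosed (\<lambda>y. \<exists>u\<in>G. act u y \<le> c)" unfolding jclosed_def
    proof (clarify)
      fix y z u w assume u: "u \<in> G" "act u y \<le> c" and w: "w \<in> G" "act w z \<le> c"
      have "act (u*w) y \<le> c" using act_mono_q[OF mult_le[of u w]] u order_trans by blast
      moreover have "act (u*w) z \<le> c" using act_mono_q[OF mult_le2[of u w]] w order_trans by blast
      ultimately have "act (u*w) (join {y,z}) \<le> c" by (simp add: act_join2_m jm_least2)
      thus "\<exists>v\<in>G. act v (join {y, z}) \<le> c" using mfilter_mult[OF G u(1) w(1)] by blast
    qed
    show "fst ` P \<noteq> {}" using P by auto
    show "\<forall>d\<in>fst ` P. \<exists>u\<in>G. act u d \<le> c" using P(2) by fastforce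
  qed
qed

end


context qm begin

lemma K:
  assumes G: "mfilter G" and H: "mfilter H"
  shows "Dn G m a b \<Longrightarrow> Dn H p a b \<Longrightarrow> Dn (G \<inter> H) (m + p) a b"
proof (induction "m + p" arbitrary: m p a b rule: less_induct)
  case less
  have one: "1 \<in> G \<inter> H" using G H mfilter_one by blast
  show ?case
  proof (cases "m = 0 \<or> p = 0")
    case True
    then have "a \<le> b" using less.prems by auto
    hence "Dn (G\<inter>H) 0 a b" by simp
    thus ?thesis using Dn_mono[OF one, of 0 a b "m+p"] by simp
  next
    case False
    then obtain m' p' where mp: "m = Suc m'" "p = Suc p'" by (metis not0_implies_Suc)
    from less.prems mp obtain c e where c: "step1 act G a c" "Dn G m' c b"
      and e: "step1 act H a e" "Dn H p' e b" by auto
    let ?PG = "\<lambda>y. \<exists>u\<in>G. act u y \<le> c"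
    let ?PH = "\<lambda>y. \<exists>w\<in>H. act w y \<le> e"
    have cG: "Cov ?PG a" by (rule step1_Cov[OF G c(1)])
    have cH: "Cov ?PH a" by (rule step1_Cov[OF H e(1)])
    have dG: "dclosed ?PG" unfolding dclosed_def using act_mono_m order_trans by blast
    have dH: "dclosed ?PH" unfolding dclosed_def using act_mono_m order_trans by blast
    have jH: "jclosed ?PH" unfolding jclosed_def
    proof (clarify)
      fix y z u w assume u: "u \<in> H" "act u y \<le> e" and w: "w \<in> H" "act w z \<le> e"
      have "act (u*w) y \<le> e" using act_mono_q[OF mult_le[of u w]] u order_trans by blast
      moreover have "act (u*w) z \<le> e" using act_mono_q[OF mult_le2[of u w]] w order_trans by blast
      ultimately have "act (u*w) (join {y,z}) \<le> e" by (simp add: act_join2_m jm_least2)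
      thus "\<exists>v\<in>H. act v (join {y, z}) \<le> e" using mfilter_mult[OF H u(1) w(1)] by blast
    qed
    have "Cov (\<lambda>y. ?PG y \<and> ?PH y) a" by (rule cov_int[OF jm shr dG dH jH cG cH])
    then obtain Y where Y: "Y \<noteq> {}" "a \<le> join Y" "\<forall>y\<in>Y. (?PG y \<and> ?PH y) \<and> y \<le> a"
      unfolding Cov_def by blast
    have "\<forall>z\<in>Y. Dn (G\<inter>H) (m+p) z b"
    proof
      fix z assume z: "z \<in> Y"
      then obtain u w where u: "u \<in> G" "act u z \<le> c" and w: "w \<in> H" "act w z \<le> e"
        and za: "z \<le> a" using Y by blast
      have uza: "act u z \<le> a" using act_le za order_trans by blast
      have wza: "act w z \<le> a" using act_le za order_trans by blast
      have 1: "Dn G m' (act u z) b" using Dn_down[OF u(2) c(2)] .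
      have 2: "Dn H p (act u z) b" using Dn_down[OF uza less.prems(2)] .
      have IH1: "Dn (G\<inter>H) (m'+p) (act u z) b" using less.hyps[OF _ 1 2] mp by simp
      have 3: "Dn G m (act w z) b" using Dn_down[OF wza less.prems(1)] .
      have 4: "Dn H p' (act w z) b" using Dn_down[OF w(2) e(2)] .
      have IH2: "Dn (G\<inter>H) (m+p') (act w z) b" using less.hyps[OF _ 3 4] mp by simp
      have "Dn (G\<inter>H) (m'+p) (join {act u z, act w z}) b"
        using Dn_join2[OF IH1] IH2 mp by simp
      moreover have "step1 act (G\<inter>H) z (join {act u z, act w z})"
        unfolding step1_def
      proof (rule exI[of _ "{(z, join {u,w})}"], simp add: join_single act_join2_q)
        show "join {u,w} \<in> G \<and> join {u,w} \<in> H"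
          using mfilter_up[OF G u(1) jq_upper1] mfilter_up[OF H w(1) jq_upper2] by blast
      qed
      ultimately have "Dn (G\<inter>H) (Suc (m'+p)) z b" by auto
      thus "Dn (G\<inter>H) (m+p) z b" using mp by simp
    qed
    hence "Dn (G\<inter>H) (m+p) (join Y) b" using Dn_join Y(1) by blast
    thus ?thesis using Dn_down Y(2) by blast
  qed
qed

lemma loc_eq_refl: "1 \<in> F \<Longrightarrow> loc_eq act F a a"
  unfolding loc_eq_def using loc_le_iff[of F a a] Dn.simps(1) by blast

lemma loc_eq_sym: "loc_eq act F a b \<Longrightarrow> loc_eq act F b a"
  unfolding loc_eq_def by blast

lemma loc_le_trans: "1 \<in> F \<Longrightarrow> loc_le act F a b \<Longrightarrow> loc_le act F b c \<Longrightarrow> loc_le act F a c"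
  using loc_le_iff Dn_trans by metis

lemma loc_eq_trans: "1 \<in> F \<Longrightarrow> loc_eq act F a b \<Longrightarrow> loc_eq act F b c \<Longrightarrow> loc_eq act F a c"
  unfolding loc_eq_def using loc_le_trans by blast

lemma cls_eq_iff: "1 \<in> F \<Longrightarrow> cls act F a = cls act F b \<longleftrightarrow> loc_eq act F a b"
proof
  assume F: "1 \<in> F" and eq: "cls act F a = cls act F b"
  have "b \<in> cls act F b" using loc_eq_refl[OF F] by (simp add: cls_def)
  hence "b \<in> cls act F a" using eq by simp
  thus "loc_eq act F a b" by (simp add: cls_def)
next
  assume F: "1 \<in> F" and ab: "loc_eq act F a b"
  show "cls act F a = cls act F b" unfolding cls_def
    using loc_eq_trans[OF F] loc_eq_sym ab by blast
qed

lemma loc_eq_filter: "F \<subseteq> G \<Longrightarrow> 1 \<in> F \<Longrightarrow> loc_eq act F a b \<Longrightarrow> loc_eq act G a b"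
proof -
  assume FG: "F \<subseteq> G" and F: "1 \<in> F" and ab: "loc_eq act F a b"
  have G: "1 \<in> G" using FG F by blast
  show ?thesis using ab unfolding loc_eq_def loc_le_iff[OF F] loc_le_iff[OF G]
    using Dn_filter[OF FG] by blast
qed

lemma locmap_cls: "1 \<in> F \<Longrightarrow> F \<subseteq> G \<Longrightarrow> locmap act F G (cls act F a) = cls act G a"
proof -
  assume F: "1 \<in> F" and FG: "F \<subseteq> G"
  have G: "1 \<in> G" using FG F by blast
  have "a \<in> cls act F a" using loc_eq_refl[OF F] by (simp add: cls_def)
  hence "(SOME x. x \<in> cls act F a) \<in> cls act F a" by (rule someI)
  hence "loc_eq act G a (SOME x. x \<in> cls act F a)"
    using loc_eq_filter[OF FG F] by (simp add: cls_def)
  thus ?thesis unfolding locmap_def using cls_eq_iff[OF G] by metis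
qed

lemma mfsum_mfilter: "mfilter (mfsum F G)"
  unfolding mfsum_def mfilter_def by blast

lemma mfsum_one: "1 \<in> mfsum F G"
  using mfsum_mfilter mfilter_one by blast

lemma mfsum_sub1: "F \<subseteq> mfsum F G" unfolding mfsum_def by blast
lemma mfsum_sub2: "G \<subseteq> mfsum F G" unfolding mfsum_def by blast
lemma mfsum_comm: "mfsum F G = mfsum G F" unfolding mfsum_def by (simp add: Un_commute)

lemma mfsum_char:
  assumes F: "mfilter (F::'q set)" and G: "mfilter G" and s: "s \<in> mfsum F G"
  shows "\<exists>f\<in>F. \<exists>g\<in>G. f * g \<le> s"
proof -
  let ?T = "{q. \<exists>f\<in>F. \<exists>g\<in>G. f * g \<le> q}"
  have "mfilter ?T" unfolding mfilter_def
  proof (intro conjI allI impI ballI)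
    have "1 \<in> F" "1 \<in> G" "1 * 1 \<le> (1::'q)" using F G mfilter_one by auto
    thus "1 \<in> ?T" by blast
  next
    fix a b assume "a \<in> ?T \<and> a \<le> b" thus "b \<in> ?T" using order_trans by blast
  next
    fix a b assume "a \<in> ?T" "b \<in> ?T"
    then obtain f g f' g' where fg: "f\<in>F" "g\<in>G" "f*g \<le> a" "f'\<in>F" "g'\<in>G" "f'*g' \<le> b" by blast
    have "(f*f')*(g*g') = (f*g)*(f'*g')" by (simp add: ac_simps)
    also have "\<dots> \<le> a * (f'*g')" using mult_mono_r[OF fg(3), of "f'*g'"] by (simp add: mult.commute)
    also have "\<dots> \<le> a * b" using mult_mono_r[OF fg(6)] by simp
    finally show "a * b \<in> ?T" using fg mfilter_mult[OF F] mfilter_mult[OF G] by blast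
  qed
  moreover have "F \<union> G \<subseteq> ?T"
  proof
    fix x assume "x \<in> F \<union> G"
    thus "x \<in> ?T"
    proof
      assume "x \<in> F" thus ?thesis using mfilter_one[OF G] by force
    next
      assume "x \<in> G" thus ?thesis using mfilter_one[OF F] by force
    qed
  qed
  ultimately have "mfsum F G \<subseteq> ?T" unfolding mfsum_def by blast
  thus ?thesis using s by blast
qed

end


context qm begin

lemma inter_k:
  fixes n k :: nat
  assumes mf: "\<forall>k\<in>{1..n}. mfilter (Fs k)"
  shows "1 \<le> k \<Longrightarrow> k \<le> n \<Longrightarrow> (\<forall>i\<in>{1..k}. \<exists>m. Dn (Fs i) m a b) \<Longrightarrow> (\<exists>m. Dn (\<Inter>i\<in>{1..k}. Fs i) m a b)"
proof (induction k)
  case 0 thus ?case by simp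
next
  case (Suc k)
  show ?case
  proof (cases "k = 0")
    case True thus ?thesis using Suc.prems by simp
  next
    case False
    have G: "mfilter (\<Inter>i\<in>{1..k}. Fs i)" using mf Suc.prems by (intro mfilter_Inter) auto
    have H: "mfilter (Fs (Suc k))" using mf Suc.prems by auto
    obtain m where m: "Dn (\<Inter>i\<in>{1..k}. Fs i) m a b" using Suc False by auto
    have "Suc k \<in> {1..Suc k}" by simp
    then obtain p where p: "Dn (Fs (Suc k)) p a b" using Suc.prems(3) by blast
    have "Dn ((\<Inter>i\<in>{1..k}. Fs i) \<inter> Fs (Suc k)) (m+p) a b" using K[OF G H m p] .
    moreover have "(\<Inter>i\<in>{1..Suc k}. Fs i) = (\<Inter>i\<in>{1..k}. Fs i) \<inter> Fs (Suc k)"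
      using atLeastAtMostSuc_conv[of 1 k] by auto
    ultimately show ?thesis by auto
  qed
qed

lemma glue:
  fixes n :: nat
  assumes n: "n \<ge> 1" and mf: "\<forall>k\<in>{1..n}. mfilter (Fs k)"
    and pair: "\<forall>i\<in>{1..n}. \<forall>j\<in>{1..n}. i \<noteq> j \<longrightarrow> step1 act (mfsum (Fs i) (Fs j)) (xs i) (xs j)"
  shows "\<exists>a. \<forall>k\<in>{1..n}. loc_eq act (Fs k) a (xs k)"
proof -
  define Phi where "Phi i J y \<longleftrightarrow> (\<exists>f\<in>Fs i. \<forall>j\<in>J. \<exists>g\<in>Fs j. act (f*g) y \<le> xs j)" for i J y
  define Psi where "Psi i j y \<longleftrightarrow> (\<exists>f\<in>Fs i. \<exists>g\<in>Fs j. act (f*g) y \<le> xs j)" for i j y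
  have covPsi: "Cov (Psi i j) (xs i)" if i: "i \<in> {1..n}" and j: "j \<in> {1..n}" for i j
  proof (cases "i = j")
    case True
    have "Psi i j (xs i)" unfolding Psi_def using True mf i mfilter_one[of "Fs i"]
      by (intro bexI[of _ 1]) (auto simp: act1)
    thus ?thesis unfolding Cov_def by (intro exI[of _ "{xs i}"]) (simp add: join_single)
  next
    case False
    have Fi: "mfilter (Fs i)" and Fj: "mfilter (Fs j)" using mf i j by auto
    have "Cov (\<lambda>y. \<exists>u\<in>mfsum (Fs i) (Fs j). act u y \<le> xs j) (xs i)"
      using step1_Cov[OF mfsum_mfilter] pair i j False by blast
    thus ?thesis
    proof (rule Cov_mono)
      fix y assume "\<exists>u\<in>mfsum (Fs i) (Fs j). act u y \<le> xs j"
      then obtain u where u: "u \<in> mfsum (Fs i) (Fs j)" "act u y \<le> xs j" by blast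
      obtain f g where "f \<in> Fs i" "g \<in> Fs j" "f * g \<le> u" using mfsum_char[OF Fi Fj u(1)] by blast
      thus "Psi i j y" unfolding Psi_def using act_mono_q[of "f*g" u y] u(2) order_trans by blast
    qed
  qed
  have covPhi: "finite J \<Longrightarrow> J \<subseteq> {1..n} \<Longrightarrow> Cov (Phi i J) (xs i)" if i: "i \<in> {1..n}" for i J
  proof (induction J rule: finite_induct)
    case empty
    have "Phi i {} (xs i)" unfolding Phi_def using mf i mfilter_one[of "Fs i"] by auto
    thus ?case unfolding Cov_def by (intro exI[of _ "{xs i}"]) (simp add: join_single)
  next
    case (insert j J)
    have j: "j \<in> {1..n}" using insert by auto
    have Fi: "mfilter (Fs i)" and Fj: "mfilter (Fs j)" using mf i j by auto
    have dPhi: "dclosed (Phi i J)" unfolding dclosed_def Phi_def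
      using act_mono_m order_trans by meson
    have dPsi: "dclosed (Psi i j)" unfolding dclosed_def Psi_def
      using act_mono_m order_trans by meson
    have jPsi: "jclosed (Psi i j)" unfolding jclosed_def
    proof (intro allI impI)
      fix y z assume "Psi i j y" "Psi i j z"
      then obtain f g f' g' where fg: "f \<in> Fs i" "g \<in> Fs j" "act (f*g) y \<le> xs j"
        "f' \<in> Fs i" "g' \<in> Fs j" "act (f'*g') z \<le> xs j" unfolding Psi_def by blast
      have e: "(f*f')*(g*g') = (f*g)*(f'*g')" by (simp add: ac_simps)
      have "act ((f*f')*(g*g')) y \<le> xs j" unfolding e
        using act_mono_q[OF mult_le[of "f*g" "f'*g'"]] fg(3) order_trans by blast
      moreover have "act ((f*f')*(g*g')) z \<le> xs j" unfolding e
        using act_mono_q[OF mult_le2[of "f*g" "f'*g'"]] fg(6) order_trans by blast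
      ultimately have "act ((f*f')*(g*g')) (join {y,z}) \<le> xs j" by (simp add: act_join2_m jm_least2)
      thus "Psi i j (join {y,z})" unfolding Psi_def
        using mfilter_mult[OF Fi fg(1) fg(4)] mfilter_mult[OF Fj fg(2) fg(5)] by blast
    qed
    have "Cov (\<lambda>y. Phi i J y \<and> Psi i j y) (xs i)"
      using cov_int[OF jm shr dPhi dPsi jPsi] insert covPsi[OF i j] by auto
    thus ?case
    proof (rule Cov_mono)
      fix y assume "Phi i J y \<and> Psi i j y"
      then obtain f1 f2 g2 where f1: "f1 \<in> Fs i" "\<forall>j'\<in>J. \<exists>g\<in>Fs j'. act (f1*g) y \<le> xs j'"
        and f2: "f2 \<in> Fs i" "g2 \<in> Fs j" "act (f2*g2) y \<le> xs j" unfolding Phi_def Psi_def by blast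
      have "\<forall>j'\<in>insert j J. \<exists>g\<in>Fs j'. act ((f1*f2)*g) y \<le> xs j'"
      proof
        fix j' assume "j' \<in> insert j J"
        then show "\<exists>g\<in>Fs j'. act ((f1*f2)*g) y \<le> xs j'"
        proof
          assume "j' = j"
          have "(f1*f2)*g2 = f1*(f2*g2)" by (simp add: ac_simps)
          hence "act ((f1*f2)*g2) y \<le> act (f2*g2) y" using act_mono_q[OF mult_le2[of f1 "f2*g2"]] by simp
          thus ?thesis using f2 \<open>j' = j\<close> order_trans by blast
        next
          assume "j' \<in> J"
          then obtain g where g: "g \<in> Fs j'" "act (f1*g) y \<le> xs j'" using f1 by blast
          have "(f1*f2)*g = (f1*g)*f2" by (simp add: ac_simps)
          hence "act ((f1*f2)*g) y \<le> act (f1*g) y" using act_mono_q[OF mult_le[of "f1*g" f2]] by simp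
          thus ?thesis using g order_trans by blast
        qed
      qed
      thus "Phi i (insert j J) y" unfolding Phi_def using mfilter_mult[OF Fi f1(1) f2(1)] by blast
    qed
  qed
  define A where "A = {z. \<forall>j\<in>{1..n}. \<exists>g\<in>Fs j. act g z \<le> xs j}"
  have Yex: "\<exists>Y. Y \<noteq> {} \<and> xs i \<le> join Y \<and> (\<forall>y\<in>Y. \<exists>f\<in>Fs i. act f y \<in> A)" if i: "i \<in> {1..n}" for i
  proof -
    have "Cov (Phi i {1..n}) (xs i)" using covPhi[OF i, of "{1..n}"] by simp
    then obtain Y where Y: "Y \<noteq> {}" "xs i \<le> join Y" "\<forall>y\<in>Y. Phi i {1..n} y \<and> y \<le> xs i"
      unfolding Cov_def by blast
    have "\<forall>y\<in>Y. \<exists>f\<in>Fs i. act f y \<in> A"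
    proof
      fix y assume "y \<in> Y"
      then obtain f where f: "f \<in> Fs i" "\<forall>j\<in>{1..n}. \<exists>g\<in>Fs j. act (f*g) y \<le> xs j"
        using Y unfolding Phi_def by blast
      have "act f y \<in> A" unfolding A_def using f(2) by (simp add: act_mult[symmetric] mult.commute)
      thus "\<exists>f\<in>Fs i. act f y \<in> A" using f(1) by blast
    qed
    thus ?thesis using Y by blast
  qed
  have Ane: "A \<noteq> {}"
  proof -
    obtain Y where "Y \<noteq> {}" "\<forall>y\<in>Y. \<exists>f\<in>Fs 1. act f y \<in> A" using Yex[of 1] n by auto
    thus ?thesis by blast
  qed
  have "loc_eq act (Fs k) (join A) (xs k)" if k: "k \<in> {1..n}" for k
  proof -
    have Fk: "mfilter (Fs k)" using mf k by auto
    have one: "1 \<in> Fs k" using mfilter_one[OF Fk] .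
    have s1: "step1 act (Fs k) (join A) (xs k)" unfolding step1_def
    proof (rule exI[of _ "(\<lambda>z. (z, SOME g. g \<in> Fs k \<and> act g z \<le> xs k)) ` A"], intro conjI)
      show "(\<lambda>z. (z, SOME g. g \<in> Fs k \<and> act g z \<le> xs k)) ` A \<noteq> {}" using Ane by simp
      show "\<forall>(c, s)\<in>(\<lambda>z. (z, SOME g. g \<in> Fs k \<and> act g z \<le> xs k)) ` A. s \<in> Fs k \<and> act s c \<le> xs k"
      proof clarify
        fix z assume "z \<in> A"
        hence "\<exists>g. g \<in> Fs k \<and> act g z \<le> xs k" unfolding A_def using k by blast
        thus "(SOME g. g \<in> Fs k \<and> act g z \<le> xs k) \<in> Fs k \<and> act (SOME g. g \<in> Fs k \<and> act g z \<le> xs k) z \<le> xs k"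
          by (rule someI_ex)
      qed
      show "join A \<le> join (fst ` (\<lambda>z. (z, SOME g. g \<in> Fs k \<and> act g z \<le> xs k)) ` A)"
        by (simp add: image_image)
    qed
    obtain Y where Y: "Y \<noteq> {}" "xs k \<le> join Y" "\<forall>y\<in>Y. \<exists>f\<in>Fs k. act f y \<in> A" using Yex[OF k] by blast
    have s2: "step1 act (Fs k) (xs k) (join A)" unfolding step1_def
    proof (rule exI[of _ "(\<lambda>y. (y, SOME f. f \<in> Fs k \<and> act f y \<in> A)) ` Y"], intro conjI)
      show "(\<lambda>y. (y, SOME f. f \<in> Fs k \<and> act f y \<in> A)) ` Y \<noteq> {}" using Y by simp
      show "\<forall>(c, s)\<in>(\<lambda>y. (y, SOME f. f \<in> Fs k \<and> act f y \<in> A)) ` Y. s \<in> Fs k \<and> act s c \<le> join A"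
      proof clarify
        fix y assume "y \<in> Y"
        hence "\<exists>f. f \<in> Fs k \<and> act f y \<in> A" using Y by blast
        hence "(SOME f. f \<in> Fs k \<and> act f y \<in> A) \<in> Fs k \<and> act (SOME f. f \<in> Fs k \<and> act f y \<in> A) y \<in> A"
          by (rule someI_ex)
        thus "(SOME f. f \<in> Fs k \<and> act f y \<in> A) \<in> Fs k \<and> act (SOME f. f \<in> Fs k \<and> act f y \<in> A) y \<le> join A"
          using join_upper[OF jm] by blast
      qed
      show "xs k \<le> join (fst ` (\<lambda>y. (y, SOME f. f \<in> Fs k \<and> act f y \<in> A)) ` Y)"
        using Y(2) by (simp add: image_image)
    qed
    have "Dn (Fs k) 1 (join A) (xs k)" using s1 by auto
    moreover have "Dn (Fs k) 1 (xs k) (join A)" using s2 by auto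
    ultimately show ?thesis unfolding loc_eq_def loc_le_iff[OF one] by blast
  qed
  thus ?thesis by blast
qed

end


theorem mainTheorem5:
  fixes act :: "'q::{order,comm_monoid_mult} \<Rightarrow> 'm::order \<Rightarrow> 'm"
    and n :: nat and Fs :: "nat \<Rightarrow> 'q set" and F :: "'q set"
  assumes "quantale TYPE('q)"
    and "qmodule act"
    and "shrinkable TYPE('m)"
    and "n \<ge> 1"
    and "\<forall>k\<in>{1..n}. mfilter (Fs k)"
    and "F = (\<Inter>k\<in>{1..n}. Fs k)"
  shows "inj_on (diag act F n Fs) (locmod act F)
    \<and> ((\<forall>i j. 1 \<le> i \<and> i < j \<and> j \<le> n \<longrightarrow> one_step act (mfsum (Fs i) (Fs j))) \<longrightarrow>
        (\<forall>xs :: nat \<Rightarrow> 'm.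
           restrict (\<lambda>k. cls act (Fs k) (xs k)) {1..n} \<in> diag act F n Fs ` locmod act F
           \<longleftrightarrow> (\<forall>i j. 1 \<le> i \<and> i < j \<and> j \<le> n \<longrightarrow>
                 locmap act (Fs i) (mfsum (Fs i) (Fs j)) (cls act (Fs i) (xs i))
               = locmap act (Fs j) (mfsum (Fs i) (Fs j)) (cls act (Fs j) (xs j)))))"
proof -
  interpret qm act using assms(1-3) by unfold_locales
  note n = assms(4) and mf = assms(5) and Fdef = assms(6)
  have oneK: "1 \<in> Fs k" if "k \<in> {1..n}" for k using mf that mfilter_one by blast
  have oneF: "1 \<in> F" unfolding Fdef using oneK by blast
  have FK: "F \<subseteq> Fs k" if "k \<in> {1..n}" for k unfolding Fdef using that by blast
  have diagk: "diag act F n Fs (cls act F a) k = cls act (Fs k) a" if k: "k \<in> {1..n}" for a k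
    unfolding diag_def using k locmap_cls[OF oneF FK[OF k]] by simp
  have ij: "1 \<in> mfsum (Fs i) (Fs j)" for i j by (rule mfsum_one)
  have Dn_F: "loc_eq act F a b" if "\<forall>k\<in>{1..n}. loc_eq act (Fs k) a b" for a b
  proof -
    have "\<forall>i\<in>{1..n}. \<exists>m. Dn (Fs i) m a b" and "\<forall>i\<in>{1..n}. \<exists>m. Dn (Fs i) m b a"
      using that loc_le_iff[OF oneK] unfolding loc_eq_def by blast+
    hence "\<exists>m. Dn F m a b" "\<exists>m. Dn F m b a" unfolding Fdef using inter_k[OF mf _ order_refl] n by blast+
    thus ?thesis unfolding loc_eq_def loc_le_iff[OF oneF] by blast
  qed
  have part_a: "inj_on (diag act F n Fs) (locmod act F)"
  proof (rule inj_onI)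
    fix C C' assume C: "C \<in> locmod act F" "C' \<in> locmod act F" and eq: "diag act F n Fs C = diag act F n Fs C'"
    obtain a b where ab: "C = cls act F a" "C' = cls act F b" using C unfolding locmod_def by blast
    have "\<forall>k\<in>{1..n}. loc_eq act (Fs k) a b"
    proof
      fix k assume k: "k \<in> {1..n}"
      have "cls act (Fs k) a = cls act (Fs k) b" using fun_cong[OF eq, of k] diagk[OF k] ab by simp
      thus "loc_eq act (Fs k) a b" using cls_eq_iff[OF oneK[OF k]] by blast
    qed
    hence "loc_eq act F a b" by (rule Dn_F)
    thus "C = C'" using ab cls_eq_iff[OF oneF] by blast
  qed
  have part_b: "(\<forall>xs :: nat \<Rightarrow> 'm.
           restrict (\<lambda>k. cls act (Fs k) (xs k)) {1..n} \<in> diag act F n Fs ` locmod act F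
           \<longleftrightarrow> (\<forall>i j. 1 \<le> i \<and> i < j \<and> j \<le> n \<longrightarrow>
                 locmap act (Fs i) (mfsum (Fs i) (Fs j)) (cls act (Fs i) (xs i))
               = locmap act (Fs j) (mfsum (Fs i) (Fs j)) (cls act (Fs j) (xs j))))"
    if os: "\<forall>i j. 1 \<le> i \<and> i < j \<and> j \<le> n \<longrightarrow> one_step act (mfsum (Fs i) (Fs j))"
  proof (rule allI, rule iffI)
    fix xs :: "nat \<Rightarrow> 'm"
    assume "restrict (\<lambda>k. cls act (Fs k) (xs k)) {1..n} \<in> diag act F n Fs ` locmod act F"
    then obtain a where a: "restrict (\<lambda>k. cls act (Fs k) (xs k)) {1..n} = diag act F n Fs (cls act F a)"
      unfolding locmod_def by blast
    have ck: "cls act (Fs k) (xs k) = cls act (Fs k) a" if k: "k \<in> {1..n}" for k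
      using fun_cong[OF a, of k] diagk[OF k] k by simp
    show "\<forall>i j. 1 \<le> i \<and> i < j \<and> j \<le> n \<longrightarrow>
                 locmap act (Fs i) (mfsum (Fs i) (Fs j)) (cls act (Fs i) (xs i))
               = locmap act (Fs j) (mfsum (Fs i) (Fs j)) (cls act (Fs j) (xs j))"
    proof (intro allI impI)
      fix i j assume "1 \<le> i \<and> i < j \<and> j \<le> n"
      hence i: "i \<in> {1..n}" and j: "j \<in> {1..n}" by auto
      have "locmap act (Fs i) (mfsum (Fs i) (Fs j)) (cls act (Fs i) (xs i)) = cls act (mfsum (Fs i) (Fs j)) a"
        using ck[OF i] locmap_cls[OF oneK[OF i] mfsum_sub1] by simp
      moreover have "locmap act (Fs j) (mfsum (Fs i) (Fs j)) (cls act (Fs j) (xs j)) = cls act (mfsum (Fs i) (Fs j)) a"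
        using ck[OF j] locmap_cls[OF oneK[OF j] mfsum_sub2] by simp
      ultimately show "locmap act (Fs i) (mfsum (Fs i) (Fs j)) (cls act (Fs i) (xs i))
               = locmap act (Fs j) (mfsum (Fs i) (Fs j)) (cls act (Fs j) (xs j))" by simp
    qed
  next
    fix xs :: "nat \<Rightarrow> 'm"
    assume eqs: "\<forall>i j. 1 \<le> i \<and> i < j \<and> j \<le> n \<longrightarrow>
                 locmap act (Fs i) (mfsum (Fs i) (Fs j)) (cls act (Fs i) (xs i))
               = locmap act (Fs j) (mfsum (Fs i) (Fs j)) (cls act (Fs j) (xs j))"
    have lt: "step1 act (mfsum (Fs i) (Fs j)) (xs i) (xs j) \<and> step1 act (mfsum (Fs i) (Fs j)) (xs j) (xs i)"
      if "1 \<le> i" "i < j" "j \<le> n" for i j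
    proof -
      have i: "i \<in> {1..n}" and j: "j \<in> {1..n}" using that by auto
      have "cls act (mfsum (Fs i) (Fs j)) (xs i) = cls act (mfsum (Fs i) (Fs j)) (xs j)"
        using eqs that locmap_cls[OF oneK[OF i] mfsum_sub1] locmap_cls[OF oneK[OF j] mfsum_sub2] by metis
      hence "loc_eq act (mfsum (Fs i) (Fs j)) (xs i) (xs j)" using cls_eq_iff[OF mfsum_one] by blast
      moreover have "one_step act (mfsum (Fs i) (Fs j))" using os that by blast
      ultimately show ?thesis unfolding one_step_def loc_eq_def by blast
    qed
    have pair: "\<forall>i\<in>{1..n}. \<forall>j\<in>{1..n}. i \<noteq> j \<longrightarrow> step1 act (mfsum (Fs i) (Fs j)) (xs i) (xs j)"
    proof (intro ballI impI)
      fix i j assume i: "i \<in> {1..n}" and j: "j \<in> {1..n}" and ne: "i \<noteq> j"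
      show "step1 act (mfsum (Fs i) (Fs j)) (xs i) (xs j)"
      proof (cases "i < j")
        case True thus ?thesis using lt i j by auto
      next
        case False
        hence "j < i" using ne by simp
        thus ?thesis using lt[of j i] i j mfsum_comm[of "Fs i" "Fs j"] by auto
      qed
    qed
    obtain a where a: "\<forall>k\<in>{1..n}. loc_eq act (Fs k) a (xs k)" using glue[OF n mf pair] by blast
    have "restrict (\<lambda>k. cls act (Fs k) (xs k)) {1..n} = diag act F n Fs (cls act F a)"
    proof
      fix k show "restrict (\<lambda>k. cls act (Fs k) (xs k)) {1..n} k = diag act F n Fs (cls act F a) k"
      proof (cases "k \<in> {1..n}")
        case True
        hence "cls act (Fs k) (xs k) = cls act (Fs k) a"
          using a cls_eq_iff[OF oneK[OF True]] loc_eq_sym by metis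
        thus ?thesis using diagk[OF True] True by simp
      next
        case False thus ?thesis by (simp add: diag_def restrict_def del: atLeastAtMost_iff)
      qed
    qed
    thus "restrict (\<lambda>k. cls act (Fs k) (xs k)) {1..n} \<in> diag act F n Fs ` locmod act F"
      unfolding locmod_def by blast
  qed
  show ?thesis using part_a part_b by blast
qed


end
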